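(* Let $u_{nm}=2^{-m-1}$ for $0\le n\le m$, and let $U(x)=\sum_{0\le n\le m<\infty}u_{nm}L_{nm}(x)$ for $x\in[-1,1]\setminus D$. Then $$\int_0^1U(x)\,dx=\frac{4}{\sqrt3}-2\qquad\text{and}\qquad U\!\left(\tfrac13\right)=\operatorname*{ess\,sup}_{x\in[-1,1]}U(x)=\frac23.$$
   Context: Signed binary expansion: every $x\in[-1,1]$ can be written as $x=\sum_{n=0}^{\infty}x_n2^{-(n+1)}$ with digits $x_n\in\{-1,+1\}$; there is a countable set $D\subset[-1,1]$ (consisting of certain dyadic rationals) outside of which this expansion is unique. For $x\in[-1,1]\setminus D$ with digits $(x_n)_{n\ge0}$ and integers $0\le n\le m$, define the loop-counting function $L_{nm}(x)=1$ if $\sum_{j=n}^{m}x_j=0$ and $L_{nm}(x)=0$ otherwise. (Note $\tfrac13\notin D$: it has digits $+1,-1,+1,-1,\dots$.) *)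

theory Defs
  imports "HOL-Analysis.Analysis" "HOL-Probability.Essential_Supremum"
begin

definition signed_expansion :: "real \<Rightarrow> (nat \<Rightarrow> real) \<Rightarrow> bool" where
  "signed_expansion x d \<longleftrightarrow> (\<forall>n. d n \<in> {-1, 1}) \<and> (\<lambda>n. d n / 2 ^ (n + 1)) sums x"

definition D_exc :: "real set" where
  "D_exc = {x \<in> {-1..1}. \<not> (\<exists>!d. signed_expansion x d)}"

text \<open>The digit sequence (meaningful for x in [-1,1] outside D).\<close>
definition digits :: "real \<Rightarrow> nat \<Rightarrow> real" where
  "digits x = (THE d. signed_expansion x d)"

definition L :: "nat \<Rightarrow> nat \<Rightarrow> real \<Rightarrow> real" where
  "L n m x = (if (\<Sum>j=n..m. digits x j) = 0 then 1 else 0)"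

definition u :: "nat \<Rightarrow> nat \<Rightarrow> real" where
  "u n m = 1 / 2 ^ (m + 1)"

definition U :: "real \<Rightarrow> real" where
  "U x = (\<Sum>m. \<Sum>n\<le>m. u n m * L n m x)"

end

theory Submission
  imports Defs
begin

fun dg :: "real \<Rightarrow> nat \<Rightarrow> real" where
  "dg x 0 = (if x < 0 then -1 else 1)"
| "dg x (Suc n) = dg (2*x - (if x < 0 then -1 else 1)) n"

lemma dg_pm: "dg x n \<in> {-1,1}"
  by (induction n arbitrary: x) auto

lemma dg_Suc: "dg x (Suc n) = dg (2*x - dg x 0) n" by simp

lemma dg_approx: "x \<in> {-1..1} \<Longrightarrow> \<bar>x - (\<Sum>n<N. dg x n / 2^(n+1))\<bar> \<le> 1/2^N"
proof (induction N arbitrary: x)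
  case 0 then show ?case by auto
next
  case (Suc N)
  define y where "y = 2*x - dg x 0"
  have y: "y \<in> {-1..1}" using Suc.prems by (auto simp: y_def)
  have "(\<Sum>n<Suc N. dg x n / 2^(n+1)) = dg x 0 / 2 + (\<Sum>n<N. dg x (Suc n) / 2^(Suc n+1))"
    by (subst sum.lessThan_Suc_shift) simp
  also have "(\<Sum>n<N. dg x (Suc n) / 2^(Suc n+1)) = (\<Sum>n<N. dg y n / 2^(n+1) / 2)"
    by (rule sum.cong) (simp_all add: y_def del: dg.simps add: dg_Suc)
  also have "\<dots> = (\<Sum>n<N. dg y n / 2^(n+1)) / 2" by (simp add: sum_divide_distrib)
  finally have "(\<Sum>n<Suc N. dg x n / 2^(n+1)) = dg x 0 / 2 + (\<Sum>n<N. dg y n / 2^(n+1)) / 2" .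
  then have "x - (\<Sum>n<Suc N. dg x n / 2^(n+1)) = (y - (\<Sum>n<N. dg y n / 2^(n+1))) / 2"
    by (simp add: y_def field_simps)
  then show ?case using Suc.IH[OF y] by simp
qed

lemma dg_sums: assumes "x \<in> {-1..1}" shows "(\<lambda>n. dg x n / 2^(n+1)) sums x"
proof -
  have "(\<lambda>N. x - (\<Sum>n<N. dg x n / 2^(n+1))) \<longlonglongrightarrow> 0"
  proof (rule Lim_null_comparison)
    show "\<forall>\<^sub>F N in sequentially. norm (x - (\<Sum>n<N. dg x n / 2^(n+1))) \<le> (1/2)^N"
      using dg_approx[OF assms] by (simp add: power_one_over)
    show "(\<lambda>N. (1/2::real)^N) \<longlonglongrightarrow> 0" by (rule LIMSEQ_power_zero) simp
  qed
  then have "(\<lambda>N. x - (x - (\<Sum>n<N. dg x n / 2^(n+1)))) \<longlonglongrightarrow> x - 0"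
    by (intro tendsto_diff tendsto_const)
  then show ?thesis by (simp add: sums_def)
qed

lemma dg_expansion: "x \<in> {-1..1} \<Longrightarrow> signed_expansion x (dg x)"
  unfolding signed_expansion_def using dg_sums dg_pm by auto

definition NN :: "real set" where "NN = {x. \<exists>k::nat. \<exists>z::int. x = of_int z / 2^k}"

lemma NN_countable: "countable NN"
proof -
  have "NN = (\<lambda>(k,z). of_int z / 2^k) ` (UNIV :: (nat \<times> int) set)"
    unfolding NN_def by auto
  then show ?thesis by (metis countable_image countableI_type)
qed

lemma NN_negligible: "negligible NN"
  by (simp add: negligible_iff_null_sets null_sets_completionI countable_imp_null_set_lborel NN_countable)

lemma expansion_shift:
  assumes "signed_expansion x d"
  shows "signed_expansion (2*x - d 0) (\<lambda>n. d (Suc n))"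
proof -
  have s: "(\<lambda>n. d n / 2^(n+1)) sums x" using assms by (simp add: signed_expansion_def)
  have "(\<lambda>n. d (Suc n) / 2^(Suc n+1)) sums (x - d 0 / 2)"
    using s sums_Suc_iff[of "\<lambda>n. d n / 2^(n+1)" "x - d 0/2"] by simp
  then have "(\<lambda>n. 2 * (d (Suc n) / 2^(Suc n+1))) sums (2 * (x - d 0 / 2))"
    by (rule sums_mult)
  then have "(\<lambda>n. d (Suc n) / 2^(n+1)) sums (2*x - d 0)" by (simp add: algebra_simps)
  then show ?thesis using assms by (simp add: signed_expansion_def)
qed

lemma expansion_bound:
  assumes "signed_expansion x d" shows "-1 \<le> x \<and> x \<le> 1"
proof -
  have s: "(\<lambda>n. d n / 2^(n+1)) sums x" and pm: "\<And>n. d n \<in> {-1,1}"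
    using assms by (auto simp: signed_expansion_def)
  have g: "(\<lambda>n. (1/2::real)^Suc n) sums 1" by (rule power_half_series)
  have g': "(\<lambda>n. - ((1/2::real)^Suc n)) sums (-1)" using sums_minus[OF g] .
  have le: "d n / 2^(n+1) \<le> (1/2)^Suc n" and ge: "- ((1/2)^Suc n) \<le> d n / 2^(n+1)" for n
  proof -
    have "d n = -1 \<or> d n = 1" using pm[of n] by simp
    moreover have "(0::real) < 2^(n+1)" by simp
    ultimately show "d n / 2^(n+1) \<le> (1/2)^Suc n" "- ((1/2)^Suc n) \<le> d n / 2^(n+1)"
      by (auto simp: power_one_over divide_le_cancel)
  qed
  have "x \<le> 1" by (rule sums_le[OF _ s g]) (rule le)
  moreover have "-1 \<le> x" by (rule sums_le[OF _ g' s]) (rule ge)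
  ultimately show ?thesis by simp
qed

lemma expansion_first:
  assumes "signed_expansion x d" shows "d 0 = 1 \<Longrightarrow> 0 \<le> x" "d 0 = -1 \<Longrightarrow> x \<le> 0"
proof -
  have "-1 \<le> 2*x - d 0 \<and> 2*x - d 0 \<le> 1" using expansion_bound[OF expansion_shift[OF assms]] .
  then show "d 0 = 1 \<Longrightarrow> 0 \<le> x" "d 0 = -1 \<Longrightarrow> x \<le> 0" by auto
qed

lemma NN_shift: assumes "x \<notin> NN" "e \<in> {-1,1}" shows "2*x - e \<notin> NN"
proof
  assume "2*x - e \<in> NN"
  then obtain k z where kz: "2*x - e = of_int z / 2^k" by (auto simp: NN_def)
  have "x = (of_int z + e * 2^k) / 2^(Suc k)" using kz by (simp add: field_simps)
  moreover obtain w::int where "e = of_int w"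
  proof (cases "e = 1")
    case True then show ?thesis using that[of 1] by simp
  next
    case False then have "e = -1" using assms(2) by simp
    then show ?thesis using that[of "-1"] by simp
  qed
  ultimately have "x = of_int (z + w * 2^k) / 2^(Suc k)" by simp
  then show False using assms(1) unfolding NN_def by blast
qed

lemma expansion_unique:
  assumes "signed_expansion x d" "x \<notin> NN" shows "d n = dg x n"
  using assms
proof (induction n arbitrary: x d)
  case 0
  have pm: "d 0 \<in> {-1,1}" using 0 by (simp add: signed_expansion_def)
  have "x \<noteq> 0" using 0(2) unfolding NN_def by (auto intro!: exI[of _ 0])
  then show ?case using expansion_first[OF 0(1)] pm by auto
next
  case (Suc n)
  have d0: "d 0 = dg x 0"
  proof -
    have pm: "d 0 \<in> {-1,1}" using Suc by (simp add: signed_expansion_def)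
    have "x \<noteq> 0" using Suc(3) unfolding NN_def by (auto intro!: exI[of _ 0])
    then show ?thesis using expansion_first[OF Suc(2)] pm by auto
  qed
  have pm: "d 0 \<in> {-1,1}" using Suc by (simp add: signed_expansion_def)
  have "d (Suc n) = dg (2*x - d 0) n"
    using Suc.IH[OF expansion_shift[OF Suc(2)] NN_shift[OF Suc(3) pm]] .
  then show ?case using d0 by (simp del: dg.simps add: dg_Suc)
qed

lemma digits_dg: assumes "x \<in> {-1..1}" "x \<notin> NN" shows "digits x = dg x"
  unfolding digits_def
proof (rule the_equality)
  show "signed_expansion x (dg x)" using dg_expansion assms by blast
  show "\<And>d. signed_expansion x d \<Longrightarrow> d = dg x" using expansion_unique assms by blast
qed


definition Ld :: "(nat \<Rightarrow> real) \<Rightarrow> nat \<Rightarrow> nat \<Rightarrow> real" where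
  "Ld d n m = (if (\<Sum>j=n..m. d j) = 0 then 1 else 0)"
definition aa :: "(nat \<Rightarrow> real) \<Rightarrow> nat \<Rightarrow> real" where
  "aa d m = (\<Sum>n\<le>m. u n m * Ld d n m)"
definition Ud :: "(nat \<Rightarrow> real) \<Rightarrow> real" where
  "Ud d = suminf (aa d)"
definition alt :: "nat \<Rightarrow> real" where "alt n = (-1)^n"
definition ff :: "nat \<Rightarrow> real" where "ff m = real ((m+1) div 2) / 2^(m+1)"

lemma U_Ud: "U x = Ud (digits x)"
  by (simp add: U_def Ud_def aa_def[abs_def] L_def Ld_def)

lemma sum_shift_ivl: "n \<le> m \<Longrightarrow> (\<Sum>j=n..m. d j) = (\<Sum>j<Suc (m-n). d (n+j))"
  by (simp add: sum.atLeastAtMost_shift_0 atLeast0AtMost lessThan_Suc_atMost comp_def)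

lemma pm_sum_parity:
  fixes f :: "nat \<Rightarrow> real" and k :: nat
  assumes "\<And>j. j < k \<Longrightarrow> f j \<in> {-1,1}"
  shows "\<exists>i\<le>k. (\<Sum>j<k. f j) = 2 * real i - real k"
  using assms
proof (induction k)
  case 0 then show ?case by simp
next
  case (Suc k)
  then obtain i where i: "i \<le> k" "(\<Sum>j<k. f j) = 2 * real i - real k" by force
  have "f k = -1 \<or> f k = 1" using Suc.prems[of k] by simp
  then show ?case
  proof
    assume "f k = -1" then show ?thesis using i by (intro exI[of _ i]) auto
  next
    assume "f k = 1" then show ?thesis using i by (intro exI[of _ "Suc i"]) auto
  qed
qed

lemma pm_sum_zero_even:
  fixes f :: "nat \<Rightarrow> real" and k :: nat
  assumes "\<And>j. j < k \<Longrightarrow> f j \<in> {-1,1}" "(\<Sum>j<k. f j) = 0"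
  shows "even k"
proof -
  obtain i where "(\<Sum>j<k. f j) = 2 * real i - real k" using pm_sum_parity[of k f] assms(1) by blast
  with assms(2) have "real k = real (2*i)" by simp
  then have "k = 2*i" using of_nat_eq_iff by blast
  then show ?thesis by simp
qed

lemma Ld_le:
  assumes "\<And>j. d j \<in> {-1,1}" "n \<le> m"
  shows "Ld d n m \<le> (if odd (m-n) then 1 else 0)"
proof (cases "(\<Sum>j=n..m. d j) = 0")
  case True
  then have "(\<Sum>j<Suc (m-n). d (n+j)) = 0" by (metis sum_shift_ivl[OF assms(2)])
  then have "even (Suc (m-n))" using pm_sum_zero_even[of "Suc (m-n)" "\<lambda>j. d (n+j)"] assms(1) by blast
  then show ?thesis by (simp add: Ld_def)
qed (simp add: Ld_def)

lemma alt_sum: "(\<Sum>j<k. alt (n+j)) = (if even k then 0 else alt n)"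
  by (induction k) (auto simp: alt_def power_add)

lemma Ld_alt: assumes "n \<le> m" shows "Ld alt n m = (if odd (m-n) then 1 else 0)"
proof -
  have "(\<Sum>j=n..m. alt j) = (if even (Suc (m-n)) then 0 else alt n)"
    by (simp only: sum_shift_ivl[OF assms] alt_sum)
  moreover have "alt n \<noteq> 0" by (simp add: alt_def)
  ultimately show ?thesis by (auto simp: Ld_def)
qed

lemma sum_odd_count: "(\<Sum>i\<le>m. (if odd i then 1 else 0::real)) = real ((m+1) div 2)"
proof (induction m)
  case 0 then show ?case by simp
next
  case (Suc m)
  have "(Suc m + 1) div 2 = (m+1) div 2 + (if odd (Suc m) then 1 else 0)" by presburger
  then show ?case using Suc by simp
qed

lemma aa_alt: "aa alt m = ff m"
proof -
  have "aa alt m = (\<Sum>n\<le>m. (if odd (m-n) then 1 else 0)) / 2^(m+1)"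
    by (simp add: aa_def u_def Ld_alt sum_divide_distrib)
  also have "(\<Sum>n\<le>m. (if odd (m-n) then 1 else 0::real)) = (\<Sum>n\<le>m. (if odd n then 1 else 0))"
    using sum.atLeastAtMost_rev[of "\<lambda>n. (if odd (m-n) then 1 else 0::real)" 0 m]
    by (simp add: atLeast0AtMost)
  finally show ?thesis by (simp add: sum_odd_count ff_def)
qed

lemma aa_le: assumes "\<And>j. d j \<in> {-1,1}" shows "aa d m \<le> ff m"
proof -
  have "aa d m \<le> aa alt m" unfolding aa_def
  proof (rule sum_mono)
    fix n assume "n \<in> {..m}"
    then have "Ld d n m \<le> Ld alt n m" using Ld_le[OF assms, of n m] Ld_alt[of n m] by simp
    then show "u n m * Ld d n m \<le> u n m * Ld alt n m" by (rule mult_left_mono) (simp add: u_def)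
  qed
  then show ?thesis by (simp add: aa_alt)
qed

lemma aa_nonneg: "0 \<le> aa d m"
  unfolding aa_def by (rule sum_nonneg) (simp add: u_def Ld_def)

lemma ff_sums: "ff sums (2/3)"
proof -
  define g where "g m = (real m / 2 + 3/4 - (-1)^m / 12) / 2^m" for m
  have lim: "g \<longlonglongrightarrow> 0"
  proof -
    have a: "(\<lambda>m. real m / 2^m) \<longlonglongrightarrow> 0" by real_asymp
    have b0: "(\<lambda>m. (1/2::real)^m) \<longlonglongrightarrow> 0" by (rule LIMSEQ_power_zero) simp
    have c0: "(\<lambda>m. (-1/2::real)^m) \<longlonglongrightarrow> 0" by (rule LIMSEQ_power_zero) simp
    have b: "(\<lambda>m. 1 / (2::real)^m) \<longlonglongrightarrow> 0" using b0 by (simp add: power_one_over)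
    have "(\<lambda>m. (-1::real)^m / 2^m) = (\<lambda>m. ((-1)/2)^m)" by (rule ext, rule power_divide[symmetric])
    then have c: "(\<lambda>m. (-1::real)^m / 2^m) \<longlonglongrightarrow> 0" using c0 by simp
    have "(\<lambda>m. (1/2) * (real m / 2^m) + (3/4) * (1 / (2::real)^m) - (1/12) * ((-1::real)^m / 2^m)) \<longlonglongrightarrow> (1/2)*0 + (3/4)*0 - (1/12)*0"
      by (intro tendsto_intros a b c)
    moreover have "g = (\<lambda>m. (1/2) * (real m / 2^m) + (3/4) * (1 / (2::real)^m) - (1/12) * ((-1::real)^m / 2^m))"
      by (auto simp: g_def fun_eq_iff field_simps)
    ultimately show ?thesis by simp
  qed
  have eq: "g m - g (Suc m) = ff m" for m
  proof (cases "even m")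
    case True
    then obtain j where m: "m = 2*j" by blast
    have "(2*j + 1) div 2 = j" by presburger
    then show ?thesis by (simp add: g_def ff_def m field_simps power_add)
  next
    case False
    then obtain j where m: "m = 2*j+1" using oddE by blast
    have "(2*j + 2) div 2 = j+1" by presburger
    then show ?thesis by (simp add: g_def ff_def m field_simps power_add)
  qed
  have "(\<lambda>m. g m - g (Suc m)) sums (g 0 - 0)" by (rule telescope_sums'[OF lim])
  moreover have "g 0 = 2/3" by (simp add: g_def)
  ultimately show ?thesis using eq by simp
qed

lemma ff_summable: "summable ff" using ff_sums by (rule sums_summable)

lemma aa_summable: assumes "\<And>j. d j \<in> {-1,1}" shows "summable (aa d)"
  by (rule summable_comparison_test'[OF ff_summable]) (use aa_le[OF assms] aa_nonneg in auto)

lemma Ud_le: assumes "\<And>j. d j \<in> {-1,1}" shows "Ud d \<le> 2/3"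
proof -
  have "Ud d \<le> suminf ff" unfolding Ud_def
    by (rule suminf_le[OF aa_le[OF assms] aa_summable[OF assms] ff_summable])
  then show ?thesis using ff_sums sums_unique by fastforce
qed

lemma Ud_alt: "Ud alt = 2/3"
proof -
  have "aa alt = ff" by (rule ext) (rule aa_alt)
  then show ?thesis unfolding Ud_def using ff_sums by (simp add: sums_iff)
qed

lemma partial_le_Ud: assumes "\<And>j. d j \<in> {-1,1}" shows "(\<Sum>m<M. aa d m) \<le> Ud d"
  unfolding Ud_def by (rule sum_le_suminf[OF aa_summable[OF assms]]) (auto simp: aa_nonneg)

lemma aa_local: assumes "\<And>j. j \<le> m \<Longrightarrow> d j = e j" shows "aa d m = aa e m"
  unfolding aa_def Ld_def using assms by (auto intro!: sum.cong)



lemma dg_third: "dg (1/3) n = alt n \<and> dg (-1/3) n = - alt n"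
proof (induction n)
  case 0 then show ?case by (simp add: alt_def)
next
  case (Suc n)
  have a: "2 * (1/3::real) - 1 = -1/3" and b: "2 * (-1/3::real) + 1 = 1/3" by simp_all
  show ?case using Suc by (simp add: a b alt_def)
qed

lemma dg_close:
  "\<forall>y x. (y = 1/3 \<or> y = -1/3) \<longrightarrow> \<bar>x - y\<bar> < 1/(3*2^M) \<longrightarrow> (\<forall>n\<le>M. dg x n = dg y n)"
proof (induction M)
  case 0
  show ?case
  proof (rule allI, rule allI, rule impI, rule impI)
    fix y x :: real assume y: "y = 1/3 \<or> y = -1/3" and h: "\<bar>x - y\<bar> < 1/(3*2^0)"
    then have "\<bar>x - y\<bar> < 1/3" by simp
    then have "-1/3 < x - y \<and> x - y < 1/3" using abs_less_iff[of "x-y" "1/3"] by linarith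
    then have "(x < 0) = (y < 0)" using y by auto
    then show "\<forall>n\<le>0. dg x n = dg y n" by simp
  qed
next
  case (Suc M)
  show ?case
  proof (rule allI, rule allI, rule impI, rule impI)
    fix y x :: real assume y: "y = 1/3 \<or> y = -1/3" and xy: "\<bar>x - y\<bar> < 1/(3*2^Suc M)"
    have "(1::real) \<le> 2^Suc M" by (rule one_le_power) simp
    then have "1/(3*2^Suc M) \<le> (1/3::real)" by (simp add: field_simps)
    with xy have "\<bar>x - y\<bar> < 1/3" by linarith
    then have "-1/3 < x - y \<and> x - y < 1/3" using abs_less_iff[of "x-y" "1/3"] by linarith
    then have sg: "(x < 0) = (y < 0)" using y by auto
    define s where "s = (if y < 0 then -1 else 1::real)"
    have y': "2*y - s = 1/3 \<or> 2*y - s = -1/3" using y by (auto simp: s_def)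
    have "\<bar>(2*x - s) - (2*y - s)\<bar> = 2 * \<bar>x - y\<bar>" by (simp add: abs_if)
    also have "\<dots> < 2 * (1/(3*2^Suc M))" using xy by simp
    also have "\<dots> = 1/(3*2^M)" by simp
    finally have "\<bar>(2*x - s) - (2*y - s)\<bar> < 1/(3*2^M)" .
    then have IH: "\<forall>n\<le>M. dg (2*x - s) n = dg (2*y - s) n" using Suc.IH y' by blast
    show "\<forall>n\<le>Suc M. dg x n = dg y n"
    proof (intro allI impI)
      fix n assume "n \<le> Suc M"
      then show "dg x n = dg y n"
        by (cases n) (use sg IH in \<open>auto simp: s_def\<close>)
    qed
  qed
qed

lemma third_notin: "1/3 \<notin> NN"
proof
  assume "1/3 \<in> NN"
  then obtain k z where "1/3 = real_of_int z / 2^k" by (auto simp: NN_def)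
  then have "real_of_int (2^k) = real_of_int (3*z)" by (simp add: field_simps)
  then have "(2::int)^k = 3*z" using of_int_eq_iff by blast
  then have "(2::int)^k mod 3 = 0" by simp
  moreover have "(2::int)^k mod 3 \<noteq> 0"
  proof (induction k)
    case 0 then show ?case by simp
  next
    case (Suc k)
    have "(2::int)^Suc k mod 3 = (2 * ((2::int)^k mod 3)) mod 3" by (simp add: mod_mult_right_eq)
    moreover have "(2::int)^k mod 3 \<in> {1,2}" using Suc by (auto simp: mod_pos_pos_trivial)
    ultimately show ?case by auto
  qed
  ultimately show False by simp
qed

lemma near_third:
  assumes "z < 2/3"
  obtains M where "\<And>x. \<bar>x - 1/3\<bar> < 1/(3*2^M) \<Longrightarrow> z < Ud (dg x)"
proof -
  have "(\<lambda>M. \<Sum>m<M. ff m) \<longlonglongrightarrow> 2/3" using ff_sums by (simp add: sums_def)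
  then have "eventually (\<lambda>M. z < (\<Sum>m<M. ff m)) sequentially" using assms by (rule order_tendstoD)
  then obtain M where M: "z < (\<Sum>m<M. ff m)" by (meson eventually_sequentially order_refl)
  show ?thesis
  proof (rule that[of M])
    fix x :: real assume x: "\<bar>x - 1/3\<bar> < 1/(3*2^M)"
    have "\<forall>n\<le>M. dg x n = dg (1/3) n" using dg_close x by blast
    then have "\<And>m. m < M \<Longrightarrow> aa (dg x) m = aa alt m"
      by (intro aa_local) (auto simp: dg_third)
    then have "(\<Sum>m<M. aa (dg x) m) = (\<Sum>m<M. ff m)" by (simp add: aa_alt)
    moreover have "(\<Sum>m<M. aa (dg x) m) \<le> Ud (dg x)" by (rule partial_le_Ud) (rule dg_pm)
    ultimately show "z < Ud (dg x)" using M by simp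
  qed
qed

lemma U_third: "U (1/3) = 2/3"
proof -
  have "digits (1/3) = dg (1/3)" by (rule digits_dg) (auto simp: third_notin)
  moreover have "dg (1/3) = alt" using dg_third by auto
  ultimately show ?thesis by (simp add: U_Ud Ud_alt)
qed



declare dg.simps(2)[simp del]

lemma dg_tail_pos: "0 \<le> x \<Longrightarrow> (\<lambda>n. dg x (Suc n)) = dg (2*x - 1)"
  by (simp add: fun_eq_iff dg.simps(2))
lemma dg_tail_neg: "x < 0 \<Longrightarrow> (\<lambda>n. dg x (Suc n)) = dg (2*x + 1)"
  by (simp add: fun_eq_iff dg.simps(2))

lemma aff0:
  fixes \<phi> :: "real \<Rightarrow> real"
  assumes "(\<phi> has_integral I) {-1..1}"
  shows "((\<lambda>x. \<phi> (2*x - 1)) has_integral I/2) {0..1}"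
proof -
  have "((\<lambda>x. \<phi> (2 *\<^sub>R x + (-1))) has_integral (1 / (\<bar>2\<bar> ^ DIM(real))) *\<^sub>R I)
          ((\<lambda>x. (1 / 2) *\<^sub>R x + -((1 / 2) *\<^sub>R (-1))) ` cbox (-1) 1)"
    by (rule has_integral_affinity) (use assms in \<open>simp_all add: cbox_interval\<close>)
  moreover have "((\<lambda>x. (1 / 2) *\<^sub>R x + -((1 / 2) *\<^sub>R (-1::real))) ` cbox (-1) 1) = {0..1}"
  proof -
    have "{0..1} \<subseteq> (\<lambda>x. (1 / 2) *\<^sub>R x + -((1 / 2) *\<^sub>R (-1::real))) ` {-1..1}"
    proof
      fix y :: real assume "y \<in> {0..1}"
      then show "y \<in> (\<lambda>x. (1 / 2) *\<^sub>R x + -((1 / 2) *\<^sub>R (-1::real))) ` {-1..1}"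
        by (intro image_eqI[where x="2*y-1"]) (auto simp: field_simps)
    qed
    then show ?thesis by (auto simp: cbox_interval)
  qed
  ultimately show ?thesis by (simp add: algebra_simps)
qed

lemma aff1:
  fixes \<phi> :: "real \<Rightarrow> real"
  assumes "(\<phi> has_integral I) {-1..1}"
  shows "((\<lambda>x. \<phi> (2*x + 1)) has_integral I/2) {-1..0}"
proof -
  have "((\<lambda>x. \<phi> (2 *\<^sub>R x + 1)) has_integral (1 / (\<bar>2\<bar> ^ DIM(real))) *\<^sub>R I)
          ((\<lambda>x. (1 / 2) *\<^sub>R x + -((1 / 2) *\<^sub>R 1)) ` cbox (-1) 1)"
    by (rule has_integral_affinity) (use assms in \<open>simp_all add: cbox_interval\<close>)
  moreover have "((\<lambda>x. (1 / 2) *\<^sub>R x + -((1 / 2) *\<^sub>R (1::real))) ` cbox (-1) 1) = {-1..0}"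
  proof -
    have "{-1..0} \<subseteq> (\<lambda>x. (1 / 2) *\<^sub>R x + -((1 / 2) *\<^sub>R (1::real))) ` {-1..1}"
    proof
      fix y :: real assume "y \<in> {-1..0}"
      then show "y \<in> (\<lambda>x. (1 / 2) *\<^sub>R x + -((1 / 2) *\<^sub>R (1::real))) ` {-1..1}"
        by (intro image_eqI[where x="2*y+1"]) (auto simp: field_simps)
    qed
    then show ?thesis by (auto simp: cbox_interval)
  qed
  ultimately show ?thesis by (simp add: algebra_simps)
qed

lemma half0:
  fixes \<phi> :: "(nat \<Rightarrow> real) \<Rightarrow> real"
  assumes "((\<lambda>x. \<phi> (dg x)) has_integral I) {-1..1}"
    and "\<And>x. x \<in> {0..1} \<Longrightarrow> g x = \<phi> (\<lambda>n. dg x (Suc n))"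
  shows "(g has_integral I/2) {0..1}"
proof -
  have X: "((\<lambda>x. \<phi> (dg (2*x - 1))) has_integral I/2) {0..1}"
    using aff0[of "\<lambda>y. \<phi> (dg y)", OF assms(1)] .
  have Y: "g x = \<phi> (dg (2*x - 1))" if "x \<in> {0..1} - {}" for x
  proof -
    have "0 \<le> x" "x \<in> {0..1}" using that by auto
    then show ?thesis using assms(2)[of x] dg_tail_pos[of x] by simp
  qed
  show ?thesis by (rule has_integral_spike_finite[where S="{}", OF _ Y X]) simp
qed

lemma half1:
  fixes \<phi> :: "(nat \<Rightarrow> real) \<Rightarrow> real"
  assumes "((\<lambda>x. \<phi> (dg x)) has_integral I) {-1..1}"
    and "\<And>x. x \<in> {-1..<0} \<Longrightarrow> g x = \<phi> (\<lambda>n. dg x (Suc n))"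
  shows "(g has_integral I/2) {-1..0}"
proof -
  have X: "((\<lambda>x. \<phi> (dg (2*x + 1))) has_integral I/2) {-1..0}"
    using aff1[of "\<lambda>y. \<phi> (dg y)", OF assms(1)] .
  have Y: "g x = \<phi> (dg (2*x + 1))" if "x \<in> {-1..0} - {0}" for x
  proof -
    have "x < 0" "x \<in> {-1..<0}" using that by auto
    then show ?thesis using assms(2)[of x] dg_tail_neg[of x] by simp
  qed
  show ?thesis by (rule has_integral_spike_finite[where S="{0}", OF _ Y X]) simp
qed

lemma shift_int:
  fixes \<phi> :: "(nat \<Rightarrow> real) \<Rightarrow> real"
  assumes "((\<lambda>x. \<phi> (dg x)) has_integral I) {-1..1}"
  shows "((\<lambda>x. \<phi> (\<lambda>n. dg x (Suc n))) has_integral I) {-1..1}"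
proof -
  have A: "((\<lambda>x. \<phi> (\<lambda>n. dg x (Suc n))) has_integral I/2) {-1..0}" by (rule half1[OF assms]) (rule refl)
  have B: "((\<lambda>x. \<phi> (\<lambda>n. dg x (Suc n))) has_integral I/2) {0..1}" by (rule half0[OF assms]) (rule refl)
  have "((\<lambda>x. \<phi> (\<lambda>n. dg x (Suc n))) has_integral (I/2 + I/2)) {-1..1}"
    by (rule has_integral_combine[OF _ _ A B]) simp_all
  then show ?thesis by simp
qed

fun rr :: "nat \<Rightarrow> real \<Rightarrow> real" where
  "rr 0 c = (if c = 0 then 1 else 0)"
| "rr (Suc k) c = (rr k (c - 1) + rr k (c + 1)) / 2"

lemma ind_int0: "((\<lambda>x. if (\<Sum>j<k. dg x j) = c then 1 else 0) has_integral 2 * rr k c) {-1..1}"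
proof (induction k arbitrary: c)
  case 0
  show ?case using has_integral_const_real[of "if 0 = c then 1 else (0::real)" "-1" 1] by simp
next
  case (Suc k)
  have sh: "(\<Sum>j<Suc k. dg x j) = dg x 0 + (\<Sum>j<k. dg x (Suc j))" for x
    by (rule sum.lessThan_Suc_shift)
  have A: "((\<lambda>x. if (\<Sum>j<Suc k. dg x j) = c then 1 else 0) has_integral (2 * rr k (c+1))/2) {-1..0}"
  proof (rule half1[where \<phi>="\<lambda>d. if (\<Sum>j<k. d j) = c + 1 then 1 else 0", OF Suc.IH])
    fix x :: real assume "x \<in> {-1..<0}"
    then have "dg x 0 = -1" by simp
    then show "(if (\<Sum>j<Suc k. dg x j) = c then 1 else 0) = (if (\<Sum>j<k. dg x (Suc j)) = c + 1 then 1 else 0)"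
      unfolding sh by auto
  qed
  have B: "((\<lambda>x. if (\<Sum>j<Suc k. dg x j) = c then 1 else 0) has_integral (2 * rr k (c-1))/2) {0..1}"
  proof (rule half0[where \<phi>="\<lambda>d. if (\<Sum>j<k. d j) = c - 1 then 1 else 0", OF Suc.IH])
    fix x :: real assume "x \<in> {0..1}"
    then have "dg x 0 = 1" by simp
    then show "(if (\<Sum>j<Suc k. dg x j) = c then 1 else 0) = (if (\<Sum>j<k. dg x (Suc j)) = c - 1 then 1 else 0)"
      unfolding sh by auto
  qed
  have "((\<lambda>x. if (\<Sum>j<Suc k. dg x j) = c then 1 else 0) has_integral ((2 * rr k (c+1))/2 + (2 * rr k (c-1))/2)) {-1..1}"
    by (rule has_integral_combine[OF _ _ A B]) simp_all
  moreover have eq: "(2 * rr k (c+1))/2 + (2 * rr k (c-1))/2 = 2 * rr (Suc k) c" by simp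
  ultimately show ?case by (simp only:)
qed

lemma ind_int: "((\<lambda>x. if (\<Sum>j<k. dg x (s+j)) = c then 1 else 0) has_integral 2 * rr k c) {-1..1}"
proof (induction s)
  case 0 then show ?case using ind_int0 by simp
next
  case (Suc s)
  have "((\<lambda>x. (\<lambda>d. if (\<Sum>j<k. d (s+j)) = c then 1 else 0) (\<lambda>n. dg x (Suc n))) has_integral 2 * rr k c) {-1..1}"
    by (rule shift_int) (use Suc in simp)
  then show ?case by simp
qed

lemma rr_sym: "rr k (-c) = rr k c"
proof (induction k arbitrary: c)
  case 0 then show ?case by simp
next
  case (Suc k)
  have "rr (Suc k) (-c) = (rr k (-(c+1)) + rr k (-(c-1)))/2" by simp
  also have "\<dots> = (rr k (c+1) + rr k (c-1))/2" by (simp only: Suc.IH)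
  also have "\<dots> = rr (Suc k) c" by simp
  finally show ?case .
qed

lemma rr_m1: "rr m (-1) = rr (Suc m) 0"
  using rr_sym[of m 1] by simp

declare rr.simps(2)[simp del]

lemma Ld_int01: assumes "n \<le> m"
  shows "((\<lambda>x. Ld (dg x) n m) has_integral rr (Suc (m-n)) 0) {0..1}"
proof (cases n)
  case 0
  have sh: "(\<Sum>j=0..m. dg x j) = dg x 0 + (\<Sum>j<m. dg x (Suc j))" for x
    unfolding atLeast0AtMost lessThan_Suc_atMost[symmetric] by (rule sum.lessThan_Suc_shift)
  have "((\<lambda>x. Ld (dg x) n m) has_integral (2 * rr m (-1))/2) {0..1}"
  proof (rule half0[where \<phi>="\<lambda>d. if (\<Sum>j<m. d j) = -1 then 1 else 0"])
    show "((\<lambda>x. if (\<Sum>j<m. dg x j) = -1 then 1 else 0) has_integral 2 * rr m (-1)) {-1..1}"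
      using ind_int0 .
    fix x :: real assume "x \<in> {0..1}"
    then have "dg x 0 = 1" by simp
    then show "Ld (dg x) n m = (if (\<Sum>j<m. dg x (Suc j)) = -1 then 1 else 0)"
      unfolding Ld_def 0 sh by auto
  qed
  then show ?thesis using 0 by (simp add: rr_m1)
next
  case (Suc n')
  have "((\<lambda>x. Ld (dg x) n m) has_integral (2 * rr (Suc (m-n)) 0)/2) {0..1}"
  proof (rule half0[where \<phi>="\<lambda>d. if (\<Sum>j<Suc (m-n). d (n'+j)) = 0 then 1 else 0"])
    show "((\<lambda>x. if (\<Sum>j<Suc (m-n). dg x (n'+j)) = 0 then 1 else 0) has_integral 2 * rr (Suc (m-n)) 0) {-1..1}"
      using ind_int .
    fix x :: real assume "x \<in> {0..1}"
    show "Ld (dg x) n m = (if (\<Sum>j<Suc (m-n). dg x (Suc (n'+j))) = 0 then 1 else 0)"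
      unfolding Ld_def sum_shift_ivl[OF assms] by (simp add: Suc)
  qed
  then show ?thesis by simp
qed

lemma Ld_intm: assumes "n \<le> m"
  shows "((\<lambda>x. Ld (dg x) n m) has_integral 2 * rr (Suc (m-n)) 0) {-1..1}"
proof -
  have "((\<lambda>x. if (\<Sum>j<Suc (m-n). dg x (n+j)) = 0 then 1 else 0) has_integral 2 * rr (Suc (m-n)) 0) {-1..1}"
    using ind_int .
  then show ?thesis unfolding Ld_def sum_shift_ivl[OF assms] .
qed

definition EE :: "nat \<Rightarrow> real" where "EE m = (\<Sum>n\<le>m. u n m * rr (Suc (m-n)) 0)"

lemma aa_int01: "((\<lambda>x. aa (dg x) m) has_integral EE m) {0..1}"
  unfolding aa_def EE_def
  by (rule has_integral_sum) (auto intro!: has_integral_mult_right Ld_int01)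

lemma aa_intm: "(\<lambda>x. aa (dg x) m) integrable_on {-1..1}"
  unfolding aa_def
  by (rule integrable_sum) (auto intro!: integrable_on_mult_right has_integral_integrable[OF Ld_intm])



lemma rr_bounds: "0 \<le> rr k c \<and> rr k c \<le> 1"
proof (induction k arbitrary: c)
  case 0 then show ?case by simp
next
  case (Suc k)
  have a: "0 \<le> rr k (c-1)" "rr k (c-1) \<le> 1" "0 \<le> rr k (c+1)" "rr k (c+1) \<le> 1"
    using Suc.IH[of "c-1"] Suc.IH[of "c+1"] by auto
  show ?case unfolding rr.simps(2) using a by auto
qed

definition BB :: "nat \<Rightarrow> real \<Rightarrow> real" where
  "BB k c = (\<Sum>i\<le>k. if c = 2 * real i - real k then real (k choose i) else 0)"

lemma BB_rec: "BB (Suc k) c = BB k (c-1) + BB k (c+1)"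
proof -
  define f where "f i = (if c = 2 * real i - real (Suc k) then real (Suc k choose i) else 0)" for i
  define g where "g i = (if c - 1 = 2 * real i - real k then real (k choose i) else 0)" for i
  define h where "h i = (if c + 1 = 2 * real i - real k then real (k choose i) else 0)" for i
  have "BB (Suc k) c = f 0 + (\<Sum>i\<le>k. f (Suc i))"
    unfolding BB_def f_def by (rule sum.atMost_Suc_shift)
  moreover have "f (Suc i) = g i + h (Suc i)" for i
  proof -
    have c1: "(c = 2 * real (Suc i) - real (Suc k)) = (c - 1 = 2 * real i - real k)" by auto
    have c2: "(c = 2 * real (Suc i) - real (Suc k)) = (c + 1 = 2 * real (Suc i) - real k)" by auto
    show ?thesis unfolding f_def g_def h_def c1[symmetric] c2[symmetric] by simp
  qed
  ultimately have "BB (Suc k) c = f 0 + (\<Sum>i\<le>k. g i) + (\<Sum>i\<le>k. h (Suc i))"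
    by (simp add: sum.distrib)
  moreover have "(\<Sum>i\<le>k. g i) = BB k (c-1)" unfolding g_def BB_def ..
  moreover have "f 0 + (\<Sum>i\<le>k. h (Suc i)) = BB k (c+1)"
  proof -
    have "(\<Sum>i\<le>Suc k. h i) = h 0 + (\<Sum>i\<le>k. h (Suc i))" by (rule sum.atMost_Suc_shift)
    moreover have "(\<Sum>i\<le>Suc k. h i) = (\<Sum>i\<le>k. h i)" by (simp add: h_def)
    moreover have "h 0 = f 0" by (auto simp: h_def f_def)
    moreover have "(\<Sum>i\<le>k. h i) = BB k (c+1)" unfolding h_def BB_def ..
    ultimately show ?thesis by simp
  qed
  ultimately show ?thesis by simp
qed

lemma rr_closed: "rr k c = BB k c / 2^k"
proof (induction k arbitrary: c)
  case 0 then show ?case by (simp add: BB_def)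
next
  case (Suc k)
  show ?case using Suc.IH[of "c-1"] Suc.IH[of "c+1"] by (simp add: rr.simps(2) BB_rec field_simps)
qed

lemma rr_even: "rr (2*j) 0 = real ((2*j) choose j) / 4^j"
proof -
  have "BB (2*j) 0 = (\<Sum>i\<le>2*j. if i = j then real ((2*j) choose j) else 0)"
    unfolding BB_def
  proof (rule sum.cong[OF refl])
    fix i
    have "((0::real) = 2 * real i - real (2*j)) = (i = j)" by auto
    then show "(if 0 = 2 * real i - real (2*j) then real (2 * j choose i) else 0) =
          (if i = j then real (2 * j choose j) else 0)" by auto
  qed
  also have "\<dots> = real ((2*j) choose j)" by simp
  finally show ?thesis by (simp add: rr_closed power_mult)
qed

lemma rr_odd: "rr (Suc (2*j)) 0 = 0"
proof -
  have "BB (Suc (2*j)) 0 = 0"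
    unfolding BB_def
  proof (rule sum.neutral, rule ballI)
    fix i
    have "(0::real) \<noteq> 2 * real i - real (Suc (2*j))"
    proof
      assume "(0::real) = 2 * real i - real (Suc (2*j))"
      then have "real (2*i) = real (Suc (2*j))" by simp
      then have "2*i = Suc (2*j)" using of_nat_eq_iff by blast
      then show False by presburger
    qed
    then show "(if 0 = 2 * real i - real (Suc (2*j)) then real (Suc (2 * j) choose i) else 0) = 0" by simp
  qed
  then show ?thesis by (simp add: rr_closed)
qed

lemma gchoose_step: "(a::real) gchoose (Suc k) = (a gchoose k) * (a - real k) / (real k + 1)"
proof -
  have "fact (Suc k) * (a gchoose Suc k) = (\<Prod>i = 0..<Suc k. a - of_nat i)" by (rule gbinomial_mult_fact)
  also have "\<dots> = (\<Prod>i = 0..<k. a - of_nat i) * (a - real k)" by simp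
  also have "(\<Prod>i = 0..<k. a - of_nat i) = fact k * (a gchoose k)" by (rule gbinomial_mult_fact[symmetric])
  finally have "fact k * ((real k + 1) * (a gchoose Suc k)) = fact k * ((a gchoose k) * (a - real k))"
    by (simp add: algebra_simps)
  moreover have "(fact k :: real) \<noteq> 0" by simp
  ultimately have "(real k + 1) * (a gchoose Suc k) = (a gchoose k) * (a - real k)" by simp
  moreover have "real k + 1 \<noteq> 0" by simp
  ultimately show ?thesis by (simp add: field_simps)
qed

lemma central_nat: "((Suc (Suc (2*j))) choose (Suc j)) * Suc j = 2 * Suc (2*j) * ((2*j) choose j)"
proof -
  define X where "X = (Suc (Suc (2*j))) choose (Suc j)"
  define Y where "Y = (Suc (2*j)) choose j"
  define Z where "Z = (2*j) choose j"
  define W where "W = (Suc (2*j)) choose (Suc j)"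
  have A: "Suc (Suc (2*j)) * Y = X * Suc j"
    unfolding X_def Y_def by (rule Suc_times_binomial_eq)
  have B: "Suc (2*j) * Z = W * Suc j"
    unfolding W_def Z_def by (rule Suc_times_binomial_eq)
  have C: "W = Y"
    unfolding W_def Y_def using binomial_symmetric[of "Suc j" "Suc (2*j)"] by simp
  have "X * Suc j * Suc j = Suc (Suc (2*j)) * Y * Suc j" using A by simp
  also have "\<dots> = 2 * Suc j * (W * Suc j)" using C by simp
  also have "\<dots> = 2 * Suc j * (Suc (2*j) * Z)" using B by simp
  finally have "(X * Suc j) * Suc j = (2 * Suc (2*j) * Z) * Suc j" by (simp add: algebra_simps)
  then have "X * Suc j = 2 * Suc (2*j) * Z" by (rule mult_right_cancel[THEN iffD1, rotated]) simp
  then show ?thesis unfolding X_def Z_def .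
qed

lemma aux_field: fixes a b D Z :: real assumes "b \<noteq> 0" "D \<noteq> 0"
  shows "(2 * (2*a+1) * Z / b) / (4 * D) = (Z / D) * ((2*a+1) / (2*b))"
  using assms by (simp add: field_simps)

lemma central_gchoose: "real ((2*j) choose j) / 4^j = (-1)^j * ((-1/2::real) gchoose j)"
proof (induction j)
  case 0 then show ?case by simp
next
  case (Suc j)
  define Z where "Z = real ((2*j) choose j)"
  have e: "2 * Suc j = Suc (Suc (2*j))" by simp
  have n: "real ((2*Suc j) choose Suc j) = 2 * (2*real j+1) * Z / (real j + 1)"
  proof -
    have "real ((Suc (Suc (2*j))) choose (Suc j)) * (real j + 1) = 2 * (2*real j+1) * Z"
      using arg_cong[OF central_nat[of j], of real] unfolding Z_def by (simp add: algebra_simps del: binomial_Suc_Suc)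
    then show ?thesis unfolding e by (simp add: field_simps del: binomial_Suc_Suc)
  qed
  have "real ((2*Suc j) choose Suc j) / 4^Suc j = (Z / 4^j) * ((2*real j+1) / (2*(real j + 1)))"
    unfolding n power_Suc by (rule aux_field) simp_all
  also have "\<dots> = (-1)^j * ((-1/2::real) gchoose j) * ((2*real j+1) / (2*(real j + 1)))"
    using Suc.IH unfolding Z_def by simp
  also have "\<dots> = (-1)^Suc j * ((-1/2::real) gchoose Suc j)"
    by (simp add: gchoose_step field_simps)
  finally show ?case .
qed

definition FF :: "nat \<Rightarrow> real" where "FF k = rr k 0 * (1/2)^k"

lemma FF_sums: "FF sums (2 / sqrt 3)"
proof -
  have "(\<lambda>n. ((-1/2::real) gchoose n) * (-1/4)^n) sums (1 + (-1/4)) powr (-1/2)"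
    by (rule gen_binomial_real) simp
  moreover have "(1 + (-1/4::real)) powr (-1/2) = 2 / sqrt 3"
  proof -
    have "(1 + (-1/4::real)) powr (-1/2) = (3/4) powr (-(1/2))" by simp
    also have "(3/4::real) powr (-(1/2)) = inverse ((3/4) powr (1/2))" by (rule powr_minus)
    also have "(3/4::real) powr (1/2) = sqrt (3/4)" by (rule powr_half_sqrt) simp
    also have "sqrt (3/4::real) = sqrt 3 / 2" by (simp add: real_sqrt_divide)
    finally show ?thesis by simp
  qed
  moreover have "FF (2*j) = ((-1/2::real) gchoose j) * (-1/4)^j" for j
  proof -
    have "FF (2*j) = (real ((2*j) choose j) / 4^j) * (1/4)^j"
      by (simp add: FF_def rr_even power_mult power2_eq_square)
    also have "\<dots> = (-1)^j * ((-1/2::real) gchoose j) * (1/4)^j" by (simp add: central_gchoose)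
    also have "\<dots> = ((-1/2::real) gchoose j) * (-1/4)^j"
      by (simp add: power_mult_distrib[symmetric] mult.commute mult.left_commute)
    finally show ?thesis .
  qed
  ultimately have "(\<lambda>j. FF (2*j)) sums (2 / sqrt 3)" by simp
  moreover have "strict_mono (\<lambda>j::nat. 2*j)" by (simp add: strict_mono_def)
  moreover have "FF n = 0" if "n \<notin> range (\<lambda>j::nat. 2*j)" for n
  proof -
    have "odd n" using that by auto
    then obtain j where "n = Suc (2*j)" using oddE by (metis Suc_eq_plus1)
    then show ?thesis by (simp add: FF_def rr_odd)
  qed
  ultimately show ?thesis using sums_mono_reindex[of "\<lambda>j. 2*j" FF] by simp
qed



definition SS :: "nat \<Rightarrow> real" where "SS M = (\<Sum>i<M. rr (Suc i) 0)"

lemma EE_alt: "EE m = SS (Suc m) / 2^(Suc m)"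
proof -
  have "EE m = (\<Sum>n\<le>m. rr (Suc (m-n)) 0) / 2^(Suc m)"
    by (simp add: EE_def u_def sum_divide_distrib)
  also have "(\<Sum>n\<le>m. rr (Suc (m-n)) 0) = (\<Sum>n\<le>m. rr (Suc n) 0)"
    using sum.atLeastAtMost_rev[of "\<lambda>n. rr (Suc (m-n)) 0" 0 m]
    by (simp add: atLeast0AtMost)
  also have "\<dots> = SS (Suc m)" by (simp add: SS_def lessThan_Suc_atMost)
  finally show ?thesis .
qed

lemma EE_partial: "(\<Sum>m<M. EE m) = 2 * (\<Sum>i<M. FF (Suc i)) - SS M / 2^M"
proof (induction M)
  case 0 then show ?case by (simp add: SS_def)
next
  case (Suc M)
  have s: "SS (Suc M) = SS M + rr (Suc M) 0" by (simp add: SS_def)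
  have "(\<Sum>m<Suc M. EE m) = 2 * (\<Sum>i<M. FF (Suc i)) - SS M / 2^M + (SS M + rr (Suc M) 0) / 2^(Suc M)"
    using Suc by (simp add: EE_alt s)
  also have "\<dots> = 2 * (\<Sum>i<Suc M. FF (Suc i)) - SS (Suc M) / 2^(Suc M)"
    by (simp add: s FF_def field_simps power_one_over)
  finally show ?case .
qed

lemma SS_bounds: "0 \<le> SS M \<and> SS M \<le> real M"
proof -
  have "SS M \<le> (\<Sum>i<M. 1)" unfolding SS_def by (rule sum_mono) (use rr_bounds in blast)
  moreover have "0 \<le> SS M" unfolding SS_def by (rule sum_nonneg) (use rr_bounds in blast)
  ultimately show ?thesis by simp
qed

lemma EE_sums: "EE sums (4 / sqrt 3 - 2)"
proof -
  have "(\<lambda>n. FF (Suc n)) sums (2 / sqrt 3 - FF 0)"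
    using FF_sums sums_Suc_iff[of FF "2 / sqrt 3 - FF 0"] by simp
  moreover have "FF 0 = 1" by (simp add: FF_def)
  ultimately have A: "(\<lambda>M. \<Sum>i<M. FF (Suc i)) \<longlonglongrightarrow> 2 / sqrt 3 - 1" by (simp add: sums_def)
  have B: "(\<lambda>M. SS M / 2^M) \<longlonglongrightarrow> 0"
  proof (rule Lim_null_comparison)
    show "\<forall>\<^sub>F M in sequentially. norm (SS M / 2^M) \<le> real M / 2^M"
      using SS_bounds by (auto intro!: always_eventually divide_right_mono)
    show "(\<lambda>M. real M / 2^M) \<longlonglongrightarrow> 0" by real_asymp
  qed
  have "(\<lambda>M. 2 * (\<Sum>i<M. FF (Suc i)) - SS M / 2^M) \<longlonglongrightarrow> 2 * (2 / sqrt 3 - 1) - 0"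
    by (intro tendsto_intros A B)
  then show ?thesis unfolding sums_def EE_partial by (simp add: algebra_simps)
qed

definition PP :: "nat \<Rightarrow> real \<Rightarrow> real" where "PP K x = (\<Sum>m<K. aa (dg x) m)"

lemma PP_mono: "PP K x \<le> PP (Suc K) x"
  by (simp add: PP_def aa_nonneg)

lemma PP_lim: "(\<lambda>K. PP K x) \<longlonglongrightarrow> Ud (dg x)"
  unfolding PP_def Ud_def by (rule summable_LIMSEQ[OF aa_summable]) (rule dg_pm)

lemma PP_int01: "(PP K has_integral (\<Sum>m<K. EE m)) {0..1}"
  unfolding PP_def[abs_def] by (rule has_integral_sum) (auto intro: aa_int01)

lemma PP_intm: "PP K integrable_on {-1..1}"
  unfolding PP_def[abs_def] by (rule integrable_sum) (auto intro: aa_intm)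

lemma Ud_int01: "((\<lambda>x. Ud (dg x)) has_integral (4 / sqrt 3 - 2)) {0..1}"
proof -
  have conv: "(\<lambda>K. \<Sum>m<K. EE m) \<longlonglongrightarrow> 4 / sqrt 3 - 2" using EE_sums by (simp add: sums_def)
  have ints: "integral {0..1} (PP K) = (\<Sum>m<K. EE m)" for K using PP_int01 by (rule integral_unique)
  have "bounded (range (\<lambda>K. integral {0..1} (PP K)))"
    unfolding ints using conv by (metis Bseq_eq_bounded convergent_def convergent_imp_Bseq)
  then have mc: "(\<lambda>x. Ud (dg x)) integrable_on {0..1} \<and>
      (\<lambda>K. integral {0..1} (PP K)) \<longlonglongrightarrow> integral {0..1} (\<lambda>x. Ud (dg x))"
    by (intro monotone_convergence_increasing[where f=PP])
      (auto intro: has_integral_integrable[OF PP_int01] PP_mono PP_lim)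
  then have "integral {0..1} (\<lambda>x. Ud (dg x)) = 4 / sqrt 3 - 2"
    using conv unfolding ints by (metis LIMSEQ_unique)
  then show ?thesis using mc integrable_integral by fastforce
qed

lemma Ud_intm: "(\<lambda>x. Ud (dg x)) integrable_on {-1..1}"
proof -
  have b: "0 \<le> PP K x \<and> PP K x \<le> 2/3" for K x
  proof -
    have "PP K x \<le> Ud (dg x)" unfolding PP_def by (rule partial_le_Ud) (rule dg_pm)
    moreover have "Ud (dg x) \<le> 2/3" by (rule Ud_le) (rule dg_pm)
    moreover have "0 \<le> PP K x" unfolding PP_def by (rule sum_nonneg) (simp add: aa_nonneg)
    ultimately show ?thesis by simp
  qed
  have c: "integral {-1..1} (\<lambda>x::real. 2/3::real) = 4/3" by simp
  have le: "integral {-1..1} (PP K) \<le> 4/3" for K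
    unfolding c[symmetric]
    by (rule Henstock_Kurzweil_Integration.integral_le[OF PP_intm integrable_const_ivl]) (use b in blast)
  have ge: "0 \<le> integral {-1..1} (PP K)" for K
    by (rule integral_nonneg[OF PP_intm]) (use b in blast)
  have "bounded (range (\<lambda>K. integral {-1..1} (PP K)))"
    unfolding bounded_iff
  proof (intro exI ballI)
    fix y assume "y \<in> range (\<lambda>K. integral {-1..1} (PP K))"
    then obtain K where "y = integral {-1..1} (PP K)" by blast
    then show "norm y \<le> 4/3" using le[of K] ge[of K] by simp
  qed
  then show ?thesis
    using monotone_convergence_increasing[where f=PP and S="{-1..1}" and g="\<lambda>x. Ud (dg x)"]
      PP_intm PP_mono PP_lim by blast
qed



lemma U_eq: "x \<in> {-1..1} - NN \<Longrightarrow> U x = Ud (dg x)"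
  using digits_dg[of x] by (simp add: U_Ud)

lemma U_int01: "(U has_integral (4 / sqrt 3 - 2)) {0..1}"
  by (rule has_integral_spike[OF NN_negligible _ Ud_int01]) (auto simp: U_eq)

lemma U_intm: "U integrable_on {-1..1}"
  by (rule integrable_spike[OF Ud_intm NN_negligible]) (auto simp: U_eq)

lemma U_esssup: "esssup (lebesgue_on {-1..1}) (\<lambda>x. ereal (U x)) = ereal (2/3)"
proof -
  let ?M = "lebesgue_on {-1..1::real}"
  have meas: "(\<lambda>x. ereal (U x)) \<in> borel_measurable ?M"
    by (rule borel_measurable_ereal[OF integrable_imp_measurable[OF U_intm]])
  have Om: "{-1..1::real} \<in> sets lebesgue" by simp
  have sp: "space ?M = {-1..1}" by simp
  have null: "NN \<inter> {-1..1} \<in> null_sets ?M"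
    unfolding null_sets_restrict_space[OF Om]
    using negligible_subset[OF NN_negligible, of "NN \<inter> {-1..1}"] negligible_iff_null_sets by blast
  have up: "esssup ?M (\<lambda>x. ereal (U x)) \<le> ereal (2/3)"
  proof (rule esssup_I[OF meas])
    show "AE x in ?M. ereal (U x) \<le> ereal (2/3)"
    proof (rule AE_I'[OF null])
      show "{x \<in> space ?M. \<not> ereal (U x) \<le> ereal (2/3)} \<subseteq> NN \<inter> {-1..1}"
      proof
        fix x assume x: "x \<in> {x \<in> space ?M. \<not> ereal (U x) \<le> ereal (2/3)}"
        then have "x \<in> {-1..1}" using sp by auto
        moreover have "x \<in> NN"
        proof (rule ccontr)
          assume "x \<notin> NN"
          then have "U x = Ud (dg x)" using \<open>x \<in> {-1..1}\<close> U_eq by blast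
          also have "\<dots> \<le> 2/3" by (rule Ud_le) (rule dg_pm)
          finally show False using x by simp
        qed
        ultimately show "x \<in> NN \<inter> {-1..1}" by simp
      qed
    qed
  qed
  have low: "ereal (2/3) \<le> esssup ?M (\<lambda>x. ereal (U x))"
  proof (rule ccontr)
    assume "\<not> ereal (2/3) \<le> esssup ?M (\<lambda>x. ereal (U x))"
    then have "esssup ?M (\<lambda>x. ereal (U x)) < ereal (2/3)" by simp
    then obtain z where z1: "esssup ?M (\<lambda>x. ereal (U x)) < ereal z" and z2: "ereal z < ereal (2/3)"
      using ereal_dense2 by blast
    have z: "z < 2/3" using z2 by simp
    have "AE x in ?M. ereal (U x) \<le> esssup ?M (\<lambda>x. ereal (U x))" by (rule esssup_AE)
    then have "AE x in ?M. U x < z"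
    proof (rule eventually_mono)
      fix x assume "ereal (U x) \<le> esssup ?M (\<lambda>x. ereal (U x))"
      then have "ereal (U x) < ereal z" using z1 by (rule order_le_less_trans)
      then show "U x < z" by simp
    qed
    then obtain N where N1: "{x \<in> space ?M. \<not> U x < z} \<subseteq> N" and N2: "emeasure ?M N = 0"
      and N3: "N \<in> sets ?M" by (rule AE_E)
    have "N \<in> null_sets ?M" using N2 N3 by blast
    then have "N \<in> null_sets lebesgue" using null_sets_restrict_space[OF Om] by blast
    then have negN: "negligible N" using negligible_iff_null_sets by blast
    obtain K where K: "\<And>x. \<bar>x - 1/3\<bar> < 1/(3*2^K) \<Longrightarrow> z < Ud (dg x)"
      using near_third[OF z] by blast
    define \<delta> where "\<delta> = 1/(6*2^K::real)"
    have dpos: "0 < \<delta>" by (simp add: \<delta>_def)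
    have dlt: "\<delta> < 1/(3*2^K)" by (simp add: \<delta>_def field_simps)
    have "(1::real) \<le> 2^K" by (rule one_le_power) simp
    then have dle: "\<delta> \<le> 1/6" by (simp add: \<delta>_def field_simps)
    have sub: "{1/3 - \<delta> .. 1/3 + \<delta>} \<subseteq> N \<union> NN"
    proof
      fix x assume x: "x \<in> {1/3 - \<delta> .. 1/3 + \<delta>}"
      show "x \<in> N \<union> NN"
      proof (cases "x \<in> NN")
        case False
        have xm: "x \<in> {-1..1}" using x dle by auto
        have "\<bar>x - 1/3\<bar> < 1/(3*2^K)" using x dlt by (auto simp: abs_le_iff)
        then have "z < Ud (dg x)" by (rule K)
        also have "Ud (dg x) = U x" using U_eq xm False by simp
        finally have "\<not> U x < z" by simp
        then have "x \<in> N" using N1 xm sp by blast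
        then show ?thesis by simp
      qed simp
    qed
    have "negligible {1/3 - \<delta> .. 1/3 + \<delta>}"
      by (rule negligible_subset[OF negligible_Un[OF negN NN_negligible] sub])
    moreover have "box (1/3 - \<delta>) (1/3 + \<delta>) \<noteq> {}"
      using dpos by (auto simp: box_real)
    ultimately show False using negligible_interval(1)[of "1/3 - \<delta>" "1/3 + \<delta>"] by (simp add: cbox_interval)
  qed
  show ?thesis using up low by (rule antisym)
qed

theorem mainTheorem5:
  shows "(U has_integral (4 / sqrt 3 - 2)) {0..1}
         \<and> U (1/3) = 2/3
         \<and> esssup (lebesgue_on {-1..1}) (\<lambda>x. ereal (U x)) = ereal (2/3)"
  using U_int01 U_third U_esssup by blast


end
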